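(* Let $R>1$, $C>0$, let $B\subset\mathbb R^m$ be compact, let $\Gamma:=\{x\in\mathbb R: x\ge R-1\}$, and let $h\colon B\times\Gamma\to\mathbb R$ be continuous with $\partial h/\partial x$ continuous, $|h|<C/2$ and $|\partial h/\partial x|<1/2$ on $B\times\Gamma$. Put $\Gamma_r:=\{x+ih(r,x): x\in\Gamma\}$. Fix $j\in\mathbb N$ with $j\ge R$, $j\ge C$, and $b>j+3+\frac{3C}{2}$. Let $S_j:=\{se^{i\theta}: s>0,\ |\theta|<\arcsin(C/j)\}$, $A_{j,b}:=\triangle_b\setminus\overline{S_j}$, $$\omega_1:=\{z=x+iy: j+1<x,\ |z|<b,\ |y|<C\},\qquad \omega_2:=\{x+iy: 0<x<j+2,\ |y|<C\}\cup A_{j,b}.$$ Let $\alpha\colon\bigcup_{r\in B}\{r\}\times\Gamma_r\to\mathbb C$ be continuous with $\alpha(r,\cdot)$ compactly supported on $\Gamma_r$ and $\operatorname{supp}\alpha(r,\cdot)\subset\{z=x+iy\in\Gamma_r: j+3+\frac{3C}{2}<x,\ |z|<b,\ |y|<C/2\}$ for all $r\in B$. Then for every $\epsilon>0$ there exist a family $\{H_t\}_{t>0}\subset\mathcal P(B,\mathbb C)$ and $t_0>0$ such that $\|\alpha(r,\cdot)-H_t(r,\cdot)\|_{\Gamma_r}<\epsilon$ for every $r\in B$ and $0<t<t_0$, and, for some $\delta>0$, $H_t\to0$ as $t\to0$ uniformly on $B\times(\omega_1\cap\omega_2)(\delta)$.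
   Context: $\triangle_s$ is the open disc of radius $s$ centred at $0$. For $D\subset\mathbb C$, $D(\delta):=\{z: d(z,D)<\delta\}$. $\mathcal P(B,\mathbb C):=\{f\in\mathscr C(B\times\mathbb C): f(r,\cdot)\text{ entire }\forall r\in B\}$. *)

theory Defs
  imports "HOL-Analysis.Analysis"
begin

definition P_class :: "'a::topological_space set \<Rightarrow> ('a \<Rightarrow> complex \<Rightarrow> complex) set" where
  "P_class B = {f. continuous_on (B \<times> UNIV) (\<lambda>(r, z). f r z) \<and> (\<forall>r\<in>B. f r holomorphic_on UNIV)}"

definition nbhd :: "complex set \<Rightarrow> real \<Rightarrow> complex set" where
  "nbhd D \<delta> = {z. infdist z D < \<delta>}"

definition graph_curve :: "('r \<Rightarrow> real \<Rightarrow> real) \<Rightarrow> real set \<Rightarrow> 'r \<Rightarrow> complex set" where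
  "graph_curve h \<Gamma> r = {Complex x (h r x) | x. x \<in> \<Gamma>}"

definition sector :: "real \<Rightarrow> nat \<Rightarrow> complex set" where
  "sector C j = {complex_of_real s * cis \<theta> | s \<theta>. s > 0 \<and> \<bar>\<theta>\<bar> < arcsin (C / real j)}"

end

theory Submission
  imports Defs "HOL-Complex_Analysis.Complex_Analysis"
begin

lemma gint: "(\<lambda>u::real. exp (- (c * u\<^sup>2) / t)) integrable_on {a..b}"
proof -
  have "(\<lambda>u::real. exp (- (c * u\<^sup>2) / t)) = (\<lambda>u. exp (- (c/t) * u\<^sup>2))" by (auto simp: field_simps)
  thus ?thesis by (simp only:) (intro integrable_continuous_interval continuous_intros)
qed

lemma G1: fixes \<kappa> t :: real assumes "\<kappa> > 0" "t > 0" shows "exp (- \<kappa> / t) \<le> t / \<kappa>"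
proof -
  have "\<kappa> / t \<le> exp (\<kappa> / t)" using exp_ge_add_one_self[of "\<kappa>/t"] by linarith
  hence "exp (- \<kappa> / t) * (\<kappa> / t) \<le> exp (- \<kappa> / t) * exp (\<kappa> / t)"
    by (intro mult_left_mono) auto
  also have "\<dots> = 1" by (simp add: exp_minus[symmetric] exp_add[symmetric])
  finally show ?thesis using assms by (simp add: field_simps)
qed

lemma G2: fixes t d :: real assumes "t > 0" "d \<ge> 0" shows "d * exp (- (3/4 * d\<^sup>2) / t) \<le> sqrt t"
proof -
  define y where "y = 3/4 * d\<^sup>2 / t"
  have st: "sqrt t > 0" "sqrt t * sqrt t = t" using assms by auto
  have "d \<le> sqrt t * (1 + y)"
  proof -
    have "(sqrt t - d/2)\<^sup>2 \<ge> 0" by simp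
    hence "d * sqrt t \<le> t + d\<^sup>2 / 4" using st by (simp add: power2_eq_square algebra_simps)
    also have "\<dots> \<le> t + 3/4 * d\<^sup>2" by simp
    also have "t + 3/4 * d\<^sup>2 = t * (1 + y)" using assms
      by (simp add: y_def field_simps)
    finally have "d * sqrt t \<le> t * (1 + y)" .
    hence "sqrt t * d \<le> sqrt t * (sqrt t * (1 + y))" using st(2) by (metis mult.assoc mult.commute)
    thus ?thesis using st mult_le_cancel_left_pos by blast
  qed
  also have "\<dots> \<le> sqrt t * exp y" using st by (intro mult_left_mono) auto
  finally have "d * exp (-y) \<le> sqrt t * exp y * exp (-y)"
    by (intro mult_right_mono) auto
  also have "\<dots> = sqrt t" by (simp add: exp_minus[symmetric] exp_add[symmetric] mult.assoc flip: exp_add)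
  finally show ?thesis by (simp add: y_def)
qed

lemma G3: fixes t L :: real assumes "0 < t" "t \<le> 1" "L \<ge> 1"
  shows "sqrt t / 2 \<le> integral {-L..L} (\<lambda>u. exp (- (1 * u\<^sup>2) / t))"
proof -
  have st: "sqrt t \<le> 1" "sqrt t > 0" using assms by auto
  have "sqrt t \<le> L" using st assms by linarith
  have "sqrt t / 2 = integral {-sqrt t..sqrt t} (\<lambda>u. 1/4::real)" using st by simp
  also have "\<dots> \<le> integral {-sqrt t..sqrt t} (\<lambda>u. exp (- (1 * u\<^sup>2) / t))"
  proof (rule integral_le[OF _ gint])
    fix u assume u: "u \<in> {-sqrt t..sqrt t}"
    hence "\<bar>u\<bar> \<le> sqrt t" by auto
    hence "u\<^sup>2 \<le> (sqrt t)\<^sup>2" by (metis abs_ge_zero power2_abs power_mono)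
    hence "u\<^sup>2 \<le> t" using assms by simp
    hence "-1 \<le> - (1 * u\<^sup>2) / t" using assms by (simp add: field_simps)
    hence "exp (-1) \<le> exp (- (1 * u\<^sup>2) / t)" by simp
    moreover have "1/4 \<le> exp (-1::real)"
    proof -
      have "exp (1::real) \<le> 4" using exp_le by linarith
      thus ?thesis by (simp add: exp_minus field_simps)
    qed
    ultimately show "1/4 \<le> exp (- (1 * u\<^sup>2) / t)" by linarith
  qed (rule integrable_continuous_interval, rule continuous_on_const)
  also have "\<dots> \<le> integral {-L..L} (\<lambda>u. exp (- (1 * u\<^sup>2) / t))"
    using \<open>sqrt t \<le> L\<close> by (intro integral_subset_le gint) auto
  finally show ?thesis .
qed

lemma G4: fixes t L :: real assumes "t > 0" "L \<ge> 0"
  shows "integral {-L..L} (\<lambda>u. exp (- (3/4 * u\<^sup>2) / t)) \<le> 2 * integral {-L..L} (\<lambda>u. exp (- (1 * u\<^sup>2) / t))"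
proof -
  define m where "m = sqrt 3 / 2"
  have m: "m > 0" "m \<le> 1" "m * m = 3/4" by (auto simp: m_def real_sqrt_le_iff[of 3 4, simplified])
  have img: "(\<lambda>x. x / m) ` {-(m*L)..m*L} = {-L..L}"
  proof (intro equalityI subsetI)
    fix x assume "x \<in> (\<lambda>x. x / m) ` {-(m*L)..m*L}"
    then obtain y where "y \<in> {-(m*L)..m*L}" "x = y / m" by auto
    hence "m * (-L) \<le> m * x" "m * x \<le> m * L" by auto
    thus "x \<in> {-L..L}" using m by (metis atLeastAtMost_iff mult_le_cancel_left_pos mult_minus_right)
  next
    fix x assume "x \<in> {-L..L}"
    hence "m * (-L) \<le> m * x" "m * x \<le> m * L" using m by (intro mult_left_mono; simp)+
    hence "m * x \<in> {-(m*L)..m*L}" by simp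
    moreover have "x = (m * x) / m" using m by simp
    ultimately show "x \<in> (\<lambda>x. x / m) ` {-(m*L)..m*L}" by blast
  qed
  have eq: "(\<lambda>u. exp (- (3/4 * u\<^sup>2) / t)) = (\<lambda>u. (\<lambda>v. exp (- (1 * v\<^sup>2) / t)) (m * u))"
  proof
    fix u show "exp (- (3/4 * u\<^sup>2) / t) = exp (- (1 * (m*u)\<^sup>2) / t)"
    proof -
      have "(m*u)\<^sup>2 = (m*m) * u\<^sup>2" by (simp add: power2_eq_square)
      hence hh: "(m*u)\<^sup>2 = 3/4 * u\<^sup>2" using m(3) by simp
      show ?thesis by (simp only: hh mult_1)
    qed
  qed
  have "integral {-L..L} (\<lambda>u. exp (- (3/4 * u\<^sup>2) / t)) = (1/m) * integral {-(m*L)..m*L} (\<lambda>v. exp (- (1 * v\<^sup>2) / t))"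
    using integral_stretch_real[of m "-(m*L)" "m*L" "\<lambda>v. exp (- (1 * v\<^sup>2) / t)"] m
    by (simp only: eq img) simp
  also have "\<dots> \<le> (1/m) * integral {-L..L} (\<lambda>v. exp (- (1 * v\<^sup>2) / t))"
    using m assms mult_left_le_one_le[of L m] by (intro mult_left_mono integral_subset_le gint) auto
  also have "\<dots> \<le> 2 * integral {-L..L} (\<lambda>v. exp (- (1 * v\<^sup>2) / t))"
  proof (rule mult_right_mono)
    have "sqrt 3 \<ge> (1::real)" by simp
    thus "1/m \<le> 2" using m by (simp add: m_def field_simps)
  qed (intro integral_nonneg gint, simp)
  finally show ?thesis .
qed

lemma G5: "integral {a..b} (\<lambda>x. f (x - x0)) = integral {a - x0..b - x0} (f::real\<Rightarrow>'a::banach)"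
  using integral_shift_Icc_real[of a b f "-x0"] by (simp add: o_def)

lemma normK: "cmod (exp (- (w\<^sup>2) / complex_of_real t)) = exp (- ((Re w)\<^sup>2 - (Im w)\<^sup>2) / t)"
proof -
  have "Re (- (w\<^sup>2) / complex_of_real t) = - ((Re w)\<^sup>2 - (Im w)\<^sup>2) / t"
    by (auto simp: Re_divide_of_real power2_eq_square field_split_simps)
  thus ?thesis by simp
qed

lemma normK34: assumes "t > 0" "\<bar>Im w\<bar> \<le> \<bar>Re w\<bar> / 2"
  shows "cmod (exp (- (w\<^sup>2) / complex_of_real t)) \<le> exp (- (3/4 * (Re w)\<^sup>2) / t)"
proof -
  have "(Im w)\<^sup>2 \<le> (\<bar>Re w\<bar> / 2)\<^sup>2" using assms(2)
    by (metis abs_ge_zero power2_abs power_mono)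
  hence "3/4 * (Re w)\<^sup>2 \<le> (Re w)\<^sup>2 - (Im w)\<^sup>2" by (simp add: power_divide)
  hence "- ((Re w)\<^sup>2 - (Im w)\<^sup>2) / t \<le> - (3/4 * (Re w)\<^sup>2) / t"
    using assms(1) by (intro divide_right_mono) auto
  thus ?thesis by (simp only: normK) simp
qed

locale L34 =
  fixes R C b :: real and j :: nat
    and B :: "(real ^ 'm) set"
    and h h' :: "real ^ 'm \<Rightarrow> real \<Rightarrow> real"
    and \<alpha> :: "real ^ 'm \<Rightarrow> complex \<Rightarrow> complex"
  assumes R: "R > 1" and Cpos: "C > 0"
    and B: "compact B"
    and h_cont: "continuous_on (B \<times> {R - 1..}) (\<lambda>(r, x). h r x)"
    and h_deriv: "\<forall>r\<in>B. \<forall>x\<in>{R - 1..}. (h r has_real_derivative h' r x) (at x within {R - 1..})"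
    and h'_cont: "continuous_on (B \<times> {R - 1..}) (\<lambda>(r, x). h' r x)"
    and h_bd: "\<forall>r\<in>B. \<forall>x\<in>{R - 1..}. \<bar>h r x\<bar> < C / 2"
    and h'_bd: "\<forall>r\<in>B. \<forall>x\<in>{R - 1..}. \<bar>h' r x\<bar> < 1 / 2"
    and jR: "real j \<ge> R" and jC: "real j \<ge> C"
    and b: "b > real j + 3 + 3 * C / 2"
    and \<alpha>_cont: "continuous_on (SIGMA r:B. graph_curve h {R - 1..} r) (\<lambda>(r, z). \<alpha> r z)"
    and \<alpha>_cpt: "\<forall>r\<in>B. compact (closure {z \<in> graph_curve h {R - 1..} r. \<alpha> r z \<noteq> 0})"
    and \<alpha>_supp: "\<forall>r\<in>B. closure {z \<in> graph_curve h {R - 1..} r. \<alpha> r z \<noteq> 0}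
        \<subseteq> {z \<in> graph_curve h {R - 1..} r. real j + 3 + 3 * C / 2 < Re z \<and> cmod z < b \<and> \<bar>Im z\<bar> < C / 2}"
begin

definition "a1 = real j + 3 + 3 * C / 2"
definition "LL = b - R + 2"
definition "gam r x = complex_of_real x + \<i> * complex_of_real (h r x)"
definition "gam' r x = 1 + \<i> * complex_of_real (h' r x)"
definition "KK t w = exp (- (w\<^sup>2) / complex_of_real t)"
definition "ct t = integral {-LL..LL} (\<lambda>u. exp (- (1 * u\<^sup>2) / t))"
definition "FF t r z x = \<alpha> r (gam r x) * gam' r x * KK t (gam r x - z)"
definition "HH t r z = integral {a1..b} (FF t r z) / complex_of_real (ct t)"

lemma gam_eq: "gam r x = Complex x (h r x)"
  by (simp add: gam_def Complex_eq)

lemma Re_gam[simp]: "Re (gam r x) = x" and Im_gam[simp]: "Im (gam r x) = h r x"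
  by (simp_all add: gam_def)

lemma a1_ge: "a1 \<ge> R + 3" "a1 < b" using jR Cpos b by (auto simp: a1_def)

lemma LL_ge: "LL \<ge> 1" using a1_ge by (simp add: LL_def)

lemma gam_in: "x \<ge> R - 1 \<Longrightarrow> gam r x \<in> graph_curve h {R - 1..} r"
  by (auto simp: graph_curve_def gam_eq)

lemma cont_phi: "continuous_on (B \<times> {R - 1..}) (\<lambda>(r, x). \<alpha> r (gam r x))"
proof -
  have c1: "continuous_on (B \<times> {R - 1..}) (\<lambda>p. (fst p, gam (fst p) (snd p)))"
  proof -
    have "continuous_on (B \<times> {R - 1..}) (\<lambda>p. h (fst p) (snd p))"
      using h_cont by (simp add: case_prod_beta')
    thus ?thesis unfolding gam_def by (intro continuous_intros)
  qed
  have "continuous_on (B \<times> {R - 1..}) (\<lambda>p. (\<lambda>(r, z). \<alpha> r z) (fst p, gam (fst p) (snd p)))"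
  proof (rule continuous_on_compose2[OF \<alpha>_cont c1])
    show "(\<lambda>p. (fst p, gam (fst p) (snd p))) ` (B \<times> {R - 1..}) \<subseteq> (SIGMA r:B. graph_curve h {R - 1..} r)"
    proof
      fix q assume "q \<in> (\<lambda>p. (fst p, gam (fst p) (snd p))) ` (B \<times> {R - 1..})"
      then obtain r x where "r \<in> B" "x \<ge> R - 1" "q = (r, gam r x)" by auto
      thus "q \<in> (SIGMA r:B. graph_curve h {R - 1..} r)" using gam_in by blast
    qed
  qed
  thus ?thesis by (simp add: case_prod_beta')
qed

lemma hmvt: assumes "r \<in> B" "x \<ge> R - 1" "y \<ge> R - 1"
  shows "\<bar>h r x - h r y\<bar> \<le> \<bar>x - y\<bar> / 2"
proof -
  have "norm (h r x - h r y) \<le> 1/2 * norm (x - y)"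
  proof (rule field_differentiable_bound[of "{R - 1..}"])
    fix z :: real assume "z \<in> {R - 1..}"
    thus "(h r has_field_derivative h' r z) (at z within {R - 1..})"
      using h_deriv assms(1) by auto
    have "\<bar>h' r z\<bar> < 1/2" using h'_bd assms(1) \<open>z \<in> _\<close> by blast
    thus "norm (h' r z) \<le> 1/2" by simp
  qed (use assms in auto)
  thus ?thesis by simp
qed

lemma supp: assumes "r \<in> B" "x \<ge> R - 1" "\<alpha> r (gam r x) \<noteq> 0"
  shows "a1 < x" "x < b" "cmod (gam r x) < b"
proof -
  have "gam r x \<in> graph_curve h {R - 1..} r" by (rule gam_in[OF assms(2)])
  hence "gam r x \<in> {z \<in> graph_curve h {R - 1..} r. \<alpha> r z \<noteq> 0}"
    using assms(3) by blast
  hence "gam r x \<in> closure {z \<in> graph_curve h {R - 1..} r. \<alpha> r z \<noteq> 0}"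
    by (rule subsetD[OF closure_subset])
  hence "gam r x \<in> {z \<in> graph_curve h {R - 1..} r. real j + 3 + 3 * C / 2 < Re z \<and> cmod z < b \<and> \<bar>Im z\<bar> < C / 2}"
    by (rule subsetD[OF bspec[OF \<alpha>_supp assms(1)]])
  hence "real j + 3 + 3 * C / 2 < Re (gam r x) \<and> cmod (gam r x) < b" by blast
  hence *: "a1 < x" "cmod (gam r x) < b" unfolding a1_def Re_gam by auto
  moreover have "\<bar>x\<bar> \<le> cmod (gam r x)" using abs_Re_le_cmod[of "gam r x"] by (simp only: Re_gam)
  ultimately show "a1 < x" "x < b" "cmod (gam r x) < b" by linarith+
qed

lemma phi_a1: "r \<in> B \<Longrightarrow> \<alpha> r (gam r a1) = 0"
proof (rule ccontr)
  assume "r \<in> B" "\<alpha> r (gam r a1) \<noteq> 0"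
  moreover have "a1 \<ge> R - 1" using a1_ge by simp
  ultimately show False using supp(1)[of r a1] by simp
qed

lemma phi_b: "r \<in> B \<Longrightarrow> \<alpha> r (gam r b) = 0"
proof (rule ccontr)
  assume "r \<in> B" "\<alpha> r (gam r b) \<noteq> 0"
  moreover have "b \<ge> R - 1" using a1_ge by simp
  ultimately show False using supp(2)[of r b] by simp
qed

end

context L34 begin

lemma comp_cont:
  assumes g: "continuous_on (B \<times> {R - 1..}) (\<lambda>(r, x). g r x)"
    and "continuous_on S \<rho>" "continuous_on S \<xi>" "\<And>q. q \<in> S \<Longrightarrow> \<rho> q \<in> B \<and> \<xi> q \<ge> R - 1"
  shows "continuous_on S (\<lambda>q. g (\<rho> q) (\<xi> q))"
proof -
  have c: "continuous_on S (\<lambda>q. (\<rho> q, \<xi> q))" using assms(2,3) by (intro continuous_intros)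
  have "continuous_on S (\<lambda>q. (\<lambda>(r, x). g r x) (\<rho> q, \<xi> q))"
    by (rule continuous_on_compose2[OF g c]) (use assms(4) in auto)
  thus ?thesis by simp
qed

lemma cont_FF:
  assumes "t > 0" "continuous_on S \<rho>" "continuous_on S \<xi>" "continuous_on S \<zeta>"
    "\<And>q. q \<in> S \<Longrightarrow> \<rho> q \<in> B \<and> \<xi> q \<ge> R - 1"
  shows "continuous_on S (\<lambda>q. FF t (\<rho> q) (\<zeta> q) (\<xi> q))"
    and "continuous_on S (\<lambda>q. \<alpha> (\<rho> q) (gam (\<rho> q) (\<xi> q)) * gam' (\<rho> q) (\<xi> q) *
           (KK t (gam (\<rho> q) (\<xi> q) - \<zeta> q) * (2 * (gam (\<rho> q) (\<xi> q) - \<zeta> q) / complex_of_real t)))"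
proof -
  have c1: "continuous_on S (\<lambda>q. \<alpha> (\<rho> q) (gam (\<rho> q) (\<xi> q)))"
    by (rule comp_cont[OF cont_phi assms(2,3,5)])
  have c2: "continuous_on S (\<lambda>q. h (\<rho> q) (\<xi> q))"
    by (rule comp_cont[OF h_cont assms(2,3,5)])
  have c3: "continuous_on S (\<lambda>q. h' (\<rho> q) (\<xi> q))"
    by (rule comp_cont[OF h'_cont assms(2,3,5)])
  have t: "complex_of_real t \<noteq> 0" using assms(1) by simp
  show "continuous_on S (\<lambda>q. FF t (\<rho> q) (\<zeta> q) (\<xi> q))"
    unfolding FF_def KK_def gam_def gam'_def
    using c1[unfolded gam_def] c2 c3 assms(3,4) t by (intro continuous_intros) auto
  show "continuous_on S (\<lambda>q. \<alpha> (\<rho> q) (gam (\<rho> q) (\<xi> q)) * gam' (\<rho> q) (\<xi> q) *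
           (KK t (gam (\<rho> q) (\<xi> q) - \<zeta> q) * (2 * (gam (\<rho> q) (\<xi> q) - \<zeta> q) / complex_of_real t)))"
    unfolding FF_def KK_def gam_def gam'_def
    using c1[unfolded gam_def] c2 c3 assms(3,4) t by (intro continuous_intros) auto
qed

lemma HH_P: assumes "t > 0" shows "HH t \<in> P_class B"
proof -
  have a1R: "a1 \<ge> R - 1" using a1_ge by simp
  have cc: "continuous_on ((B \<times> UNIV) \<times> cbox a1 b) (\<lambda>q. FF t (fst (fst q)) (snd (fst q)) (snd q))"
    by (rule cont_FF(1)[OF assms]) (auto intro!: continuous_intros simp: mem_Times_iff intro: order_trans[OF a1R])
  have "continuous_on (B \<times> UNIV) (\<lambda>p. integral (cbox a1 b) (\<lambda>x. FF t (fst p) (snd p) x))"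
    by (rule integral_continuous_on_param) (use cc in \<open>simp add: case_prod_beta'\<close>)
  hence cont: "continuous_on (B \<times> UNIV) (\<lambda>(r, z). HH t r z)"
    unfolding HH_def case_prod_beta' divide_inverse by (intro continuous_intros) (simp add: cbox_interval)
  have hol: "HH t r holomorphic_on UNIV" if r: "r \<in> B" for r
  proof -
    have "(\<lambda>z. integral (cbox a1 b) (\<lambda>x. FF t r z x)) holomorphic_on UNIV"
    proof (rule leibniz_rule_holomorphic)
      fix z x
      show "((\<lambda>z. FF t r z x) has_field_derivative
          \<alpha> r (gam r x) * gam' r x * (KK t (gam r x - z) * (2 * (gam r x - z) / complex_of_real t))) (at z within UNIV)"
        unfolding FF_def KK_def
        using assms by (auto intro!: derivative_eq_intros simp: power2_eq_square field_simps)
    next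
      fix z
      show "(\<lambda>x. FF t r z x) integrable_on cbox a1 b"
        by (rule integrable_continuous, rule cont_FF(1)[OF assms])
           (auto intro!: continuous_intros simp: r intro: order_trans[OF a1R])
    next
      show "continuous_on (UNIV \<times> cbox a1 b) (\<lambda>(z, x). \<alpha> r (gam r x) * gam' r x *
              (KK t (gam r x - z) * (2 * (gam r x - z) / complex_of_real t)))"
        unfolding case_prod_beta'
        by (rule cont_FF(2)[OF assms, where \<rho>="\<lambda>_. r"]) (auto intro!: continuous_intros simp: r mem_Times_iff intro: order_trans[OF a1R])
    qed simp
    thus ?thesis unfolding HH_def[abs_def] divide_inverse by (intro holomorphic_intros) (simp add: cbox_interval)
  qed
  show ?thesis unfolding P_class_def using cont hol by auto
qed

end

context L34 begin

lemma KK_hol: "t > 0 \<Longrightarrow> KK t holomorphic_on UNIV"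
  unfolding KK_def[abs_def] by (intro holomorphic_intros) auto

lemma KK_real: "KK t (complex_of_real u) = complex_of_real (exp (- (1 * u\<^sup>2) / t))"
  unfolding KK_def by (simp flip: exp_of_real)

lemma seg_bound:
  assumes r: "r \<in> B" and t: "t > 0" and x0: "x0 \<ge> R - 1" and a: "a \<ge> R - 1"
    and \<Phi>: "\<And>w. (\<Phi> has_field_derivative KK t w) (at w)"
  shows "cmod (\<Phi> (gam r a - gam r x0) - \<Phi> (complex_of_real (a - x0)))
           \<le> exp (- (3/4 * (a - x0)\<^sup>2) / t) * \<bar>h r a - h r x0\<bar>"
proof -
  define S where "S = closed_segment (complex_of_real (a - x0)) (gam r a - gam r x0)"
  have hm: "\<bar>h r a - h r x0\<bar> \<le> \<bar>a - x0\<bar> / 2" by (rule hmvt[OF r a x0])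
  have "cmod (\<Phi> (gam r a - gam r x0) - \<Phi> (complex_of_real (a - x0)))
      \<le> exp (- (3/4 * (a - x0)\<^sup>2) / t) * cmod ((gam r a - gam r x0) - complex_of_real (a - x0))"
  proof (rule field_differentiable_bound[of S])
    show "convex S" unfolding S_def by simp
    show "gam r a - gam r x0 \<in> S" "complex_of_real (a - x0) \<in> S" unfolding S_def by simp_all
    fix w assume "w \<in> S"
    show "(\<Phi> has_field_derivative KK t w) (at w within S)"
      using \<Phi> by (rule has_field_derivative_at_within)
    from \<open>w \<in> S\<close> obtain s where s: "0 \<le> s" "s \<le> 1"
      "w = (1 - s) *\<^sub>R complex_of_real (a - x0) + s *\<^sub>R (gam r a - gam r x0)"
      unfolding S_def closed_segment_def by auto
    have "Re w = Re ((1 - s) *\<^sub>R complex_of_real (a - x0) + s *\<^sub>R (gam r a - gam r x0))"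
      by (simp only: s(3))
    hence Rew: "Re w = a - x0" by (simp add: algebra_simps)
    have "Im w = Im ((1 - s) *\<^sub>R complex_of_real (a - x0) + s *\<^sub>R (gam r a - gam r x0))"
      by (simp only: s(3))
    hence Imw: "Im w = s * (h r a - h r x0)" by simp
    have "\<bar>Im w\<bar> \<le> \<bar>h r a - h r x0\<bar>" using s unfolding Imw abs_mult
      by (intro mult_left_le_one_le) auto
    hence "\<bar>Im w\<bar> \<le> \<bar>Re w\<bar> / 2" using hm Rew by simp
    hence "cmod (KK t w) \<le> exp (- (3/4 * (Re w)\<^sup>2) / t)"
      unfolding KK_def by (rule normK34[OF t])
    thus "cmod (KK t w) \<le> exp (- (3/4 * (a - x0)\<^sup>2) / t)" using Rew by simp
  qed
  also have "(gam r a - gam r x0) - complex_of_real (a - x0) = \<i> * complex_of_real (h r a - h r x0)"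
    by (simp add: gam_def algebra_simps)
  also have "cmod (\<i> * complex_of_real (h r a - h r x0)) = \<bar>h r a - h r x0\<bar>"
    by (simp only: norm_mult norm_ii norm_of_real) simp
  finally show ?thesis .
qed

lemma norm_id:
  assumes r: "r \<in> B" and t: "t > 0" and x0: "x0 \<ge> R - 1"
  shows "cmod (integral {a1..b} (\<lambda>x. gam' r x * KK t (gam r x - gam r x0))
            - complex_of_real (integral {a1..b} (\<lambda>x. exp (- (1 * (x - x0)\<^sup>2) / t))))
         \<le> exp (- (3/4 * (b - x0)\<^sup>2) / t) * \<bar>h r b - h r x0\<bar>
          + exp (- (3/4 * (a1 - x0)\<^sup>2) / t) * \<bar>h r a1 - h r x0\<bar>"
proof -
  obtain \<Phi> where \<Phi>0: "\<And>w. w \<in> UNIV \<Longrightarrow> (\<Phi> has_field_derivative KK t w) (at w within UNIV)"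
    using holomorphic_convex_primitive'[OF convex_UNIV open_UNIV KK_hol[OF t]] by blast
  have \<Phi>: "\<And>w. (\<Phi> has_field_derivative KK t w) (at w)" using \<Phi>0 by simp
  define z0 where "z0 = gam r x0"
  have a1R: "a1 \<ge> R - 1" "b \<ge> R - 1" using a1_ge by simp_all
  have ab: "a1 \<le> b" using a1_ge by simp
  have FTC1: "((\<lambda>x. gam' r x * KK t (gam r x - z0)) has_integral
                 (\<Phi> (gam r b - z0) - \<Phi> (gam r a1 - z0))) {a1..b}"
  proof -
    have "((\<lambda>x. \<Phi> (gam r x - z0)) has_integral (\<Phi> (gam r b - z0) - \<Phi> (gam r a1 - z0))) {a1..b}" if False
      using that by simp
    have "(((\<lambda>x. \<Phi> (gam r x - z0)) has_vector_derivative gam' r x * KK t (gam r x - z0)) (at x within {a1..b}))"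
      if x: "x \<in> {a1..b}" for x
    proof -
      have xR: "x \<in> {R - 1..}" using x a1R by auto
      have hd: "(h r has_field_derivative h' r x) (at x within {a1..b})"
        by (rule has_field_derivative_subset[OF bspec[OF bspec[OF h_deriv r] xR]]) (use a1R in auto)
      have gd: "((\<lambda>x. gam r x - z0) has_vector_derivative gam' r x) (at x within {a1..b})"
      proof -
        have d1: "((\<lambda>x. complex_of_real x) has_vector_derivative complex_of_real 1) (at x within {a1..b})"
          by (rule has_vector_derivative_of_real) (rule DERIV_ident)
        have d2: "((\<lambda>x. \<i> * complex_of_real (h r x)) has_vector_derivative \<i> * complex_of_real (h' r x)) (at x within {a1..b})"
          by (rule has_vector_derivative_mult_right, rule has_vector_derivative_of_real[OF hd])
        have "((\<lambda>x. complex_of_real x + \<i> * complex_of_real (h r x) - z0) has_vector_derivative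
                (complex_of_real 1 + \<i> * complex_of_real (h' r x) - 0)) (at x within {a1..b})"
          by (intro has_vector_derivative_diff has_vector_derivative_add d1 d2 has_vector_derivative_const)
        thus ?thesis unfolding gam_def gam'_def by simp
      qed
      have "(((\<lambda>w. \<Phi> w) \<circ> (\<lambda>x. gam r x - z0)) has_vector_derivative gam' r x * KK t (gam r x - z0)) (at x within {a1..b})"
        by (rule field_vector_diff_chain_within[OF gd has_field_derivative_at_within[OF \<Phi>]])
      thus ?thesis by (simp add: o_def)
    qed
    thus ?thesis by (intro fundamental_theorem_of_calculus[OF ab]) auto
  qed
  have FTC2: "((\<lambda>x. KK t (complex_of_real (x - x0))) has_integral
                 (\<Phi> (complex_of_real (b - x0)) - \<Phi> (complex_of_real (a1 - x0)))) {a1..b}"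
  proof -
    have "(((\<lambda>x. \<Phi> (complex_of_real (x - x0))) has_vector_derivative KK t (complex_of_real (x - x0))) (at x within {a1..b}))"
      for x
    proof -
      have "((\<lambda>w. \<Phi> (w - complex_of_real x0)) has_field_derivative KK t (complex_of_real x - complex_of_real x0)) (at (complex_of_real x))"
      proof -
        have "((\<lambda>w. w - complex_of_real x0) has_field_derivative 1) (at (complex_of_real x))"
          by (auto intro!: derivative_eq_intros)
        from DERIV_chain2[OF \<Phi> this] show ?thesis by simp
      qed
      from has_vector_derivative_real_field[OF this]
      show ?thesis by simp
    qed
    thus ?thesis by (intro fundamental_theorem_of_calculus[OF ab]) auto
  qed
  have gi: "(\<lambda>x. exp (- (1 * (x - x0)\<^sup>2) / t)) integrable_on {a1..b}"
    using t by (intro integrable_continuous_interval continuous_intros) auto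
  have "((\<lambda>x. complex_of_real (exp (- (1 * (x - x0)\<^sup>2) / t))) has_integral
          complex_of_real (integral {a1..b} (\<lambda>x. exp (- (1 * (x - x0)\<^sup>2) / t)))) {a1..b}"
    by (rule has_integral_of_real[OF integrable_integral[OF gi]])
  moreover have "(\<lambda>x. KK t (complex_of_real (x - x0))) = (\<lambda>x. complex_of_real (exp (- (1 * (x - x0)\<^sup>2) / t)))"
    by (simp only: KK_real)
  ultimately have IR: "complex_of_real (integral {a1..b} (\<lambda>x. exp (- (1 * (x - x0)\<^sup>2) / t)))
      = \<Phi> (complex_of_real (b - x0)) - \<Phi> (complex_of_real (a1 - x0))"
    using FTC2 has_integral_unique by metis
  have "integral {a1..b} (\<lambda>x. gam' r x * KK t (gam r x - gam r x0))
            - complex_of_real (integral {a1..b} (\<lambda>x. exp (- (1 * (x - x0)\<^sup>2) / t)))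
       = (\<Phi> (gam r b - z0) - \<Phi> (complex_of_real (b - x0))) - (\<Phi> (gam r a1 - z0) - \<Phi> (complex_of_real (a1 - x0)))"
    unfolding IR integral_unique[OF FTC1[unfolded z0_def]] z0_def by simp
  also have "cmod \<dots> \<le> cmod (\<Phi> (gam r b - z0) - \<Phi> (complex_of_real (b - x0))) + cmod (\<Phi> (gam r a1 - z0) - \<Phi> (complex_of_real (a1 - x0)))"
    by (rule norm_triangle_ineq4)
  also have "\<dots> \<le> exp (- (3/4 * (b - x0)\<^sup>2) / t) * \<bar>h r b - h r x0\<bar>
          + exp (- (3/4 * (a1 - x0)\<^sup>2) / t) * \<bar>h r a1 - h r x0\<bar>"
    unfolding z0_def by (intro add_mono seg_bound[OF r t x0] a1R \<Phi>)
  finally show ?thesis .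
qed

end

context L34 begin

lemma gam'_bd: assumes "r \<in> B" "x \<ge> R - 1" shows "cmod (gam' r x) \<le> 3/2"
proof -
  have "\<bar>h' r x\<bar> < 1/2" using h'_bd assms by auto
  have "cmod (gam' r x) \<le> cmod 1 + cmod (\<i> * complex_of_real (h' r x))"
    unfolding gam'_def by (rule norm_triangle_ineq)
  also have "cmod (\<i> * complex_of_real (h' r x)) = \<bar>h' r x\<bar>"
    by (metis norm_mult norm_ii norm_of_real mult_1)
  finally show ?thesis using \<open>\<bar>h' r x\<bar> < 1/2\<close> by simp
qed

lemma K_bd: assumes "r \<in> B" "t > 0" "x \<ge> R - 1" "x0 \<ge> R - 1"
  shows "cmod (KK t (gam r x - gam r x0)) \<le> exp (- (3/4 * (x - x0)\<^sup>2) / t)"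
proof -
  have "\<bar>Im (gam r x - gam r x0)\<bar> \<le> \<bar>Re (gam r x - gam r x0)\<bar> / 2"
    using hmvt[OF assms(1,3,4)] by simp
  from normK34[OF assms(2) this] show ?thesis unfolding KK_def by simp
qed

lemma ct_pos: assumes "0 < t" "t \<le> 1" shows "sqrt t / 2 \<le> ct t" "ct t > 0"
proof -
  show "sqrt t / 2 \<le> ct t" unfolding ct_def by (rule G3[OF assms LL_ge])
  moreover have "sqrt t > 0" using assms by simp
  ultimately show "ct t > 0" by linarith
qed

lemma E34_int: assumes t: "t > 0" and x0: "x0 \<ge> R - 1"
  shows "integral {a1..b} (\<lambda>x. exp (- (3/4 * (x - x0)\<^sup>2) / t)) \<le> 2 * ct t"
proof -
  define x1 where "x1 = min x0 (b + 1)"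
  have x1: "x1 \<ge> R - 1" "x1 \<le> b + 1" using x0 a1_ge by (auto simp: x1_def)
  have "integral {a1..b} (\<lambda>x. exp (- (3/4 * (x - x0)\<^sup>2) / t))
      \<le> integral {a1..b} (\<lambda>x. exp (- (3/4 * (x - x1)\<^sup>2) / t))"
  proof (rule integral_le)
    show "(\<lambda>x. exp (- (3/4 * (x - x0)\<^sup>2) / t)) integrable_on {a1..b}"
      using t by (intro integrable_continuous_interval continuous_intros) auto
    show "(\<lambda>x. exp (- (3/4 * (x - x1)\<^sup>2) / t)) integrable_on {a1..b}"
      using t by (intro integrable_continuous_interval continuous_intros) auto
    fix x assume x: "x \<in> {a1..b}"
    have "(x - x1)\<^sup>2 \<le> (x - x0)\<^sup>2"
    proof (cases "x0 \<le> b + 1")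
      case True thus ?thesis by (simp add: x1_def)
    next
      case False
      hence "x1 = b + 1" by (simp add: x1_def)
      hence "\<bar>x - x1\<bar> \<le> \<bar>x - x0\<bar>" using x False by auto
      thus ?thesis by (metis abs_ge_zero power2_abs power_mono)
    qed
    hence "- (3/4 * (x - x0)\<^sup>2) / t \<le> - (3/4 * (x - x1)\<^sup>2) / t"
      using t by (intro divide_right_mono) auto
    thus "exp (- (3/4 * (x - x0)\<^sup>2) / t) \<le> exp (- (3/4 * (x - x1)\<^sup>2) / t)" by simp
  qed
  also have "\<dots> = integral {a1 - x1..b - x1} (\<lambda>u. exp (- (3/4 * u\<^sup>2) / t))"
    by (rule G5)
  also have "\<dots> \<le> integral {-LL..LL} (\<lambda>u. exp (- (3/4 * u\<^sup>2) / t))"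
  proof (rule integral_subset_le)
    show "{a1 - x1..b - x1} \<subseteq> {-LL..LL}" using x1 a1_ge by (auto simp: LL_def)
  qed (use t in \<open>auto intro!: integrable_continuous_interval continuous_intros\<close>)
  also have "\<dots> \<le> 2 * ct t" unfolding ct_def using t LL_ge by (intro G4) auto
  finally show ?thesis .
qed

lemma I_bounds: assumes t: "t > 0" and x0: "a1 \<le> x0" "x0 \<le> b"
  shows "0 \<le> integral {a1..b} (\<lambda>x. exp (- (1 * (x - x0)\<^sup>2) / t))"
    "integral {a1..b} (\<lambda>x. exp (- (1 * (x - x0)\<^sup>2) / t)) \<le> ct t"
    "\<lbrakk>\<rho> > 0; a1 + \<rho> \<le> x0; x0 \<le> b - \<rho>\<rbrakk> \<Longrightarrow>
       ct t - integral {a1..b} (\<lambda>x. exp (- (1 * (x - x0)\<^sup>2) / t)) \<le> 2 * LL * exp (- \<rho>\<^sup>2 / t)"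
proof -
  define g where "g = (\<lambda>u::real. exp (- (1 * u\<^sup>2) / t))"
  have gi: "g integrable_on {p..q}" for p q unfolding g_def by (rule gint)
  have I: "integral {a1..b} (\<lambda>x. exp (- (1 * (x - x0)\<^sup>2) / t)) = integral {a1 - x0..b - x0} g"
    unfolding g_def by (rule G5)
  have sub: "-LL \<le> a1 - x0" "a1 - x0 \<le> b - x0" "b - x0 \<le> LL" using x0 a1_ge by (auto simp: LL_def)
  have c: "ct t = integral {-LL..a1 - x0} g + integral {a1 - x0..b - x0} g + integral {b - x0..LL} g"
  proof -
    have "integral {-LL..a1 - x0} g + integral {a1 - x0..LL} g = integral {-LL..LL} g"
      using sub by (intro Henstock_Kurzweil_Integration.integral_combine gi) auto
    moreover have "integral {a1 - x0..b - x0} g + integral {b - x0..LL} g = integral {a1 - x0..LL} g"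
      using sub by (intro Henstock_Kurzweil_Integration.integral_combine gi) auto
    ultimately show ?thesis unfolding ct_def g_def by simp
  qed
  have nn: "0 \<le> integral {p..q} g" for p q unfolding g_def by (intro integral_nonneg gint) auto
  show "0 \<le> integral {a1..b} (\<lambda>x. exp (- (1 * (x - x0)\<^sup>2) / t))" unfolding I by (rule nn)
  show "integral {a1..b} (\<lambda>x. exp (- (1 * (x - x0)\<^sup>2) / t)) \<le> ct t"
    unfolding I c using nn[of "-LL" "a1 - x0"] nn[of "b - x0" LL] by linarith
  assume \<rho>: "\<rho> > 0" "a1 + \<rho> \<le> x0" "x0 \<le> b - \<rho>"
  have tail: "integral {p..q} g \<le> LL * exp (- \<rho>\<^sup>2 / t)"
    if "p \<le> q" "q - p \<le> LL" "\<And>u. u \<in> {p..q} \<Longrightarrow> \<rho> \<le> \<bar>u\<bar>" for p q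
  proof -
    have "integral {p..q} g \<le> integral {p..q} (\<lambda>u. exp (- \<rho>\<^sup>2 / t))"
    proof (rule integral_le[OF gi])
      fix u assume u: "u \<in> {p..q}"
      have "\<rho>\<^sup>2 \<le> u\<^sup>2" using that(3)[OF u] \<rho>(1) by (metis abs_ge_zero less_imp_le power2_abs power_mono)
      hence "- (1 * u\<^sup>2) / t \<le> - \<rho>\<^sup>2 / t" using t by (intro divide_right_mono) auto
      thus "g u \<le> exp (- \<rho>\<^sup>2 / t)" unfolding g_def by simp
    qed (rule integrable_continuous_interval, rule continuous_on_const)
    also have "\<dots> = (q - p) * exp (- \<rho>\<^sup>2 / t)" using that(1) by simp
    also have "\<dots> \<le> LL * exp (- \<rho>\<^sup>2 / t)" using that(2) by (intro mult_right_mono) auto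
    finally show ?thesis .
  qed
  have "integral {-LL..a1 - x0} g \<le> LL * exp (- \<rho>\<^sup>2 / t)"
    using sub \<rho> by (intro tail) auto
  moreover have "integral {b - x0..LL} g \<le> LL * exp (- \<rho>\<^sup>2 / t)"
    using sub \<rho> by (intro tail) auto
  ultimately show "ct t - integral {a1..b} (\<lambda>x. exp (- (1 * (x - x0)\<^sup>2) / t)) \<le> 2 * LL * exp (- \<rho>\<^sup>2 / t)"
    unfolding I c by linarith
qed

end

context L34 begin

lemma approx:
  assumes r: "r \<in> B" and t: "0 < t" "t \<le> 1" and x0: "x0 \<ge> R - 1"
    and M: "M \<ge> 0" "\<And>r x. r \<in> B \<Longrightarrow> x \<ge> R - 1 \<Longrightarrow> cmod (\<alpha> r (gam r x)) \<le> M"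
    and \<rho>: "0 < \<rho>" "\<rho> \<le> 1" and \<eta>: "\<eta> \<ge> 0"
    and UC: "\<And>r x y. r \<in> B \<Longrightarrow> x \<in> {R - 1..b + 1} \<Longrightarrow> y \<in> {R - 1..b + 1} \<Longrightarrow> \<bar>x - y\<bar> < \<rho>
               \<Longrightarrow> cmod (\<alpha> r (gam r x) - \<alpha> r (gam r y)) \<le> \<eta>"
  shows "ct t * cmod (\<alpha> r (gam r x0) - HH t r (gam r x0))
           \<le> 6 * \<eta> * ct t + M * (3 * (b - a1) + 2 * LL + 2 * C) * exp (- (3/4 * \<rho>\<^sup>2) / t)"
proof -
  define f where "f x = \<alpha> r (gam r x)" for x
  define f0 where "f0 = f x0"
  define z0 where "z0 = gam r x0"
  define c where "c = ct t"
  define ke where "ke = exp (- (3/4 * \<rho>\<^sup>2) / t)"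
  define E where "E x = exp (- (3/4 * (x - x0)\<^sup>2) / t)" for x
  define G where "G x = gam' r x * KK t (gam r x - z0)" for x
  have a1R: "a1 \<ge> R - 1" "b \<ge> R - 1" "a1 \<le> b" using a1_ge by simp_all
  have inR: "x \<in> {a1..b} \<Longrightarrow> x \<ge> R - 1" for x using a1R by auto
  have c: "c > 0" "sqrt t / 2 \<le> c" using ct_pos[OF t] by (simp_all add: c_def)
  have ke: "ke > 0" by (simp add: ke_def)
  have fM: "cmod (f x) \<le> M" if "x \<ge> R - 1" for x using M(2)[OF r that] by (simp add: f_def)
  have f0M: "cmod f0 \<le> M" using fM[OF x0] by (simp add: f0_def)
  have cf: "continuous_on {a1..b} f"
    unfolding f_def by (rule comp_cont[OF cont_phi, where \<rho>="\<lambda>_. r"]) (auto intro!: continuous_intros simp: r inR)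
  have ch: "continuous_on {a1..b} (\<lambda>x. h r x)"
    by (rule comp_cont[OF h_cont, where \<rho>="\<lambda>_. r"]) (auto intro!: continuous_intros simp: r inR)
  have ch': "continuous_on {a1..b} (\<lambda>x. h' r x)"
    by (rule comp_cont[OF h'_cont, where \<rho>="\<lambda>_. r"]) (auto intro!: continuous_intros simp: r inR)
  have cG: "continuous_on {a1..b} G"
    unfolding G_def gam'_def gam_def KK_def using ch ch' t by (intro continuous_intros) auto
  have iG: "G integrable_on {a1..b}" by (rule integrable_continuous_interval[OF cG])
  have ifG: "(\<lambda>x. (f x - f0) * G x) integrable_on {a1..b}"
    by (rule integrable_continuous_interval) (intro continuous_intros cf cG)
  have iE: "E integrable_on {a1..b}" unfolding E_def using t
    by (intro integrable_continuous_interval continuous_intros) auto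
  have FFeq: "FF t r z0 x = (f x - f0) * G x + f0 * G x" for x
    by (simp add: FF_def f_def G_def algebra_simps)
  have intF: "integral {a1..b} (FF t r z0) = integral {a1..b} (\<lambda>x. (f x - f0) * G x) + f0 * integral {a1..b} G"
    unfolding FFeq by (subst integral_add[OF ifG]) (auto intro: integrable_on_mult_right[OF iG])
  define A where "A = integral {a1..b} (\<lambda>x. (f x - f0) * G x)"
  define N where "N = integral {a1..b} G"
  have "complex_of_real c * (f0 - HH t r z0) = f0 * (complex_of_real c - N) - A"
    unfolding HH_def intF A_def N_def c_def[symmetric] using c by (simp add: field_simps)
  hence "cmod (complex_of_real c * (f0 - HH t r z0)) = cmod (f0 * (complex_of_real c - N) - A)"
    by simp
  hence "c * cmod (f0 - HH t r z0) = cmod (f0 * (complex_of_real c - N) - A)"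
    using c by (simp add: norm_mult)
  also have "\<dots> \<le> cmod f0 * cmod (complex_of_real c - N) + cmod A"
    using norm_triangle_ineq4[of "f0 * (complex_of_real c - N)" A] by (simp add: norm_mult)
  finally have main: "c * cmod (f0 - HH t r z0) \<le> cmod f0 * cmod (complex_of_real c - N) + cmod A" .
  have termA: "cmod A \<le> 3 * \<eta> * c + 3 * M * (b - a1) * ke"
  proof -
    have "cmod A \<le> integral {a1..b} (\<lambda>x. 3/2 * (\<eta> * E x) + 3 * M * ke)"
      unfolding A_def
    proof (rule integral_norm_bound_integral[OF ifG])
      show "(\<lambda>x. 3/2 * (\<eta> * E x) + 3 * M * ke) integrable_on {a1..b}"
        using iE by (intro integrable_add integrable_cmul integrable_on_mult_right) (auto intro: integrable_continuous_interval)
      fix x assume x: "x \<in> {a1..b}"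
      have xR: "x \<ge> R - 1" using inR[OF x] .
      have Gb: "cmod (G x) \<le> 3/2 * E x"
      proof -
        have "cmod (G x) = cmod (gam' r x) * cmod (KK t (gam r x - z0))" by (simp add: G_def norm_mult)
        also have "\<dots> \<le> 3/2 * E x"
          unfolding E_def z0_def by (intro mult_mono gam'_bd K_bd r t xR x0) auto
        finally show ?thesis .
      qed
      have E0: "0 \<le> E x" "E x \<le> 1" using t by (auto simp: E_def)
      show "cmod ((f x - f0) * G x) \<le> 3/2 * (\<eta> * E x) + 3 * M * ke"
      proof (cases "\<bar>x - x0\<bar> < \<rho>")
        case True
        have "x0 \<le> b + 1" using True x \<rho> by auto
        hence "cmod (f x - f0) \<le> \<eta>" unfolding f_def f0_def
          using UC[OF r _ _ True] x xR x0 by auto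
        hence "cmod ((f x - f0) * G x) \<le> \<eta> * (3/2 * E x)"
          unfolding norm_mult using Gb \<eta> by (intro mult_mono) auto
        moreover have "0 \<le> 3 * M * ke" using M ke by simp
        ultimately show ?thesis by simp
      next
        case False
        have "\<rho> \<le> \<bar>x - x0\<bar>" using False by simp
        hence "\<rho>\<^sup>2 \<le> \<bar>x - x0\<bar>\<^sup>2" using \<rho> by (intro power_mono) auto
        hence "\<rho>\<^sup>2 \<le> (x - x0)\<^sup>2" by simp
        hence "- (3/4 * (x - x0)\<^sup>2) / t \<le> - (3/4 * \<rho>\<^sup>2) / t" using t by (intro divide_right_mono) auto
        hence Eke: "E x \<le> ke" by (simp add: E_def ke_def)
        have "cmod (f x - f0) \<le> 2 * M"
          using norm_triangle_ineq4[of "f x" f0] fM[OF xR] f0M by simp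
        hence "cmod ((f x - f0) * G x) \<le> (2 * M) * (3/2 * ke)"
          unfolding norm_mult using Gb Eke M(1) by (intro mult_mono) auto
        moreover have "0 \<le> 3/2 * (\<eta> * E x)" using \<eta> E0 by simp
        ultimately show ?thesis by simp
      qed
    qed
    also have "\<dots> = 3/2 * (\<eta> * integral {a1..b} E) + 3 * M * ke * (b - a1)"
    proof -
      have "(\<lambda>x. 3/2 * (\<eta> * E x)) integrable_on {a1..b}" by (intro integrable_on_mult_right iE)
      thus ?thesis using a1R by (subst integral_add) (auto intro!: integrable_continuous_interval)
    qed
    also have "\<dots> \<le> 3/2 * (\<eta> * (2 * c)) + 3 * M * ke * (b - a1)"
      using E34_int[OF t(1) x0] \<eta> M(1) ke unfolding E_def c_def by (intro add_mono mult_left_mono) auto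
    finally show ?thesis by (simp add: algebra_simps)
  qed
  have termB: "cmod f0 * cmod (complex_of_real c - N) \<le> 3 * \<eta> * c + M * (2 * LL + 2 * C) * ke"
  proof (cases "f0 = 0")
    case True thus ?thesis using \<eta> c M ke LL_ge Cpos by simp
  next
    case False
    hence xa: "a1 < x0" "x0 < b" using supp[OF r x0] by (auto simp: f0_def f_def)
    define I where "I = integral {a1..b} (\<lambda>x. exp (- (1 * (x - x0)\<^sup>2) / t))"
    have NI: "cmod (N - complex_of_real I) \<le> exp (- (3/4 * (b - x0)\<^sup>2) / t) * \<bar>h r b - h r x0\<bar>
          + exp (- (3/4 * (a1 - x0)\<^sup>2) / t) * \<bar>h r a1 - h r x0\<bar>"
      unfolding N_def I_def G_def z0_def by (rule norm_id[OF r t(1) x0])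
    have I: "0 \<le> I" "I \<le> c" unfolding I_def c_def using I_bounds[OF t(1)] xa by auto
    have "cmod (complex_of_real c - N) \<le> cmod (N - complex_of_real I) + \<bar>c - I\<bar>"
    proof -
      have "complex_of_real c - N = complex_of_real (c - I) - (N - complex_of_real I)" by simp
      hence "cmod (complex_of_real c - N) \<le> cmod (complex_of_real (c - I)) + cmod (N - complex_of_real I)"
        using norm_triangle_ineq4[of "complex_of_real (c - I)" "N - complex_of_real I"] by simp
      moreover have "cmod (complex_of_real (c - I)) = \<bar>c - I\<bar>" by (rule norm_of_real)
      ultimately show ?thesis by linarith
    qed
    note cN = this
    show ?thesis
    proof (cases "x0 - a1 < \<rho> \<or> b - x0 < \<rho>")
      case True
      have f0\<eta>: "cmod f0 \<le> \<eta>"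
      proof (cases "x0 - a1 < \<rho>")
        case True
        have "cmod (\<alpha> r (gam r x0) - \<alpha> r (gam r a1)) \<le> \<eta>"
          using True xa a1R by (intro UC[OF r]) auto
        thus ?thesis using phi_a1[OF r] by (simp add: f0_def f_def)
      next
        case False
        hence "b - x0 < \<rho>" using \<open>x0 - a1 < \<rho> \<or> b - x0 < \<rho>\<close> by simp
        have "cmod (\<alpha> r (gam r x0) - \<alpha> r (gam r b)) \<le> \<eta>"
          using \<open>b - x0 < \<rho>\<close> xa a1R by (intro UC[OF r]) auto
        thus ?thesis using phi_b[OF r] by (simp add: f0_def f_def)
      qed
      have Vb: "exp (- (3/4 * (a - x0)\<^sup>2) / t) * \<bar>h r a - h r x0\<bar> \<le> sqrt t / 2" if "a \<ge> R - 1" for a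
      proof -
        have "exp (- (3/4 * (a - x0)\<^sup>2) / t) * \<bar>h r a - h r x0\<bar> \<le> exp (- (3/4 * (a - x0)\<^sup>2) / t) * (\<bar>a - x0\<bar> / 2)"
          using hmvt[OF r that x0] by (intro mult_left_mono) auto
        also have "\<dots> = (\<bar>a - x0\<bar> * exp (- (3/4 * \<bar>a - x0\<bar>\<^sup>2) / t)) / 2" by simp
        also have "\<dots> \<le> sqrt t / 2" using G2[OF t(1), of "\<bar>a - x0\<bar>"] by simp
        finally show ?thesis .
      qed
      have "cmod (complex_of_real c - N) \<le> sqrt t / 2 + sqrt t / 2 + c"
        using cN NI Vb[of b] Vb[of a1] a1R I by linarith
      also have "\<dots> \<le> 3 * c" using c by linarith
      finally have "cmod f0 * cmod (complex_of_real c - N) \<le> \<eta> * (3 * c)"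
        using f0\<eta> \<eta> by (intro mult_mono) auto
      moreover have "0 \<le> M * (2 * LL + 2 * C) * ke" using M ke LL_ge Cpos by simp
      ultimately show ?thesis by simp
    next
      case False
      hence far: "a1 + \<rho> \<le> x0" "x0 \<le> b - \<rho>" by auto
      have cI: "c - I \<le> 2 * LL * exp (- \<rho>\<^sup>2 / t)"
        unfolding c_def I_def by (rule I_bounds(3)[OF t(1) _ _ \<rho>(1) far]) (use xa in auto)
      have "exp (- \<rho>\<^sup>2 / t) \<le> ke"
      proof -
        have "- \<rho>\<^sup>2 / t \<le> - (3/4 * \<rho>\<^sup>2) / t" using t by (intro divide_right_mono) auto
        thus ?thesis by (simp add: ke_def)
      qed
      hence "2 * LL * exp (- \<rho>\<^sup>2 / t) \<le> 2 * LL * ke" using LL_ge by (intro mult_left_mono) auto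
      hence cI': "\<bar>c - I\<bar> \<le> 2 * LL * ke" using cI I by linarith
      have Vb: "exp (- (3/4 * (a - x0)\<^sup>2) / t) * \<bar>h r a - h r x0\<bar> \<le> ke * C"
        if "a \<ge> R - 1" "\<rho> \<le> \<bar>a - x0\<bar>" for a
      proof -
        have "\<rho>\<^sup>2 \<le> \<bar>a - x0\<bar>\<^sup>2" using that(2) \<rho> by (intro power_mono) auto
        hence "\<rho>\<^sup>2 \<le> (a - x0)\<^sup>2" by simp
        hence "- (3/4 * (a - x0)\<^sup>2) / t \<le> - (3/4 * \<rho>\<^sup>2) / t" using t by (intro divide_right_mono) auto
        hence e: "exp (- (3/4 * (a - x0)\<^sup>2) / t) \<le> ke" by (simp add: ke_def)
        have "\<bar>h r a\<bar> < C / 2" "\<bar>h r x0\<bar> < C / 2" using h_bd r that(1) x0 by auto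
        hence "\<bar>h r a - h r x0\<bar> \<le> C" by linarith
        thus ?thesis using e ke by (intro mult_mono) auto
      qed
      have "cmod (complex_of_real c - N) \<le> ke * C + ke * C + 2 * LL * ke"
      proof -
        have "\<rho> \<le> \<bar>b - x0\<bar>" "\<rho> \<le> \<bar>a1 - x0\<bar>" using far by auto
        thus ?thesis using cN NI Vb[of b] Vb[of a1] a1R cI' by linarith
      qed
      hence "cmod f0 * cmod (complex_of_real c - N) \<le> M * (ke * C + ke * C + 2 * LL * ke)"
        using f0M M(1) by (intro mult_mono) auto
      moreover have "0 \<le> 3 * \<eta> * c" using \<eta> c by simp
      ultimately show ?thesis by (simp add: algebra_simps)
    qed
  qed
  have "c * cmod (f0 - HH t r z0) \<le> 3 * \<eta> * c + M * (2 * LL + 2 * C) * ke + (3 * \<eta> * c + 3 * M * (b - a1) * ke)"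
    using main termA termB by linarith
  thus ?thesis unfolding f0_def f_def z0_def c_def ke_def by (simp add: algebra_simps)
qed

end

lemma in_sector:
  fixes C :: real and j :: nat and d :: complex
  assumes C: "C > 0" "real j \<ge> C" and d: "Re d > real j + 1" "\<bar>Im d\<bar> < C"
  shows "d \<in> sector C j"
proof -
  define s where "s = cmod d"
  define u where "u = Im d / s"
  have j: "real j > 0" using C by linarith
  have s: "s \<ge> Re d" using abs_Re_le_cmod[of d] by (simp add: s_def)
  hence s0: "s > 0" "s > real j" using d j by linarith+
  have u1: "\<bar>u\<bar> \<le> 1" using abs_Im_le_cmod[of d] s0 by (simp add: u_def s_def abs_div)
  have uC: "\<bar>u\<bar> < C / real j"
  proof -
    have "\<bar>Im d\<bar> * real j < C * real j" using d j by simp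
    also have "\<dots> \<le> C * s" using s0 C by simp
    finally show ?thesis using s0 j by (simp add: u_def abs_div field_simps)
  qed
  have Cj: "C / real j \<le> 1" using C j by simp
  define \<theta> where "\<theta> = arcsin u"
  have sin: "sin \<theta> = u" using u1 by (simp add: \<theta>_def)
  have cos: "cos \<theta> = sqrt (1 - u\<^sup>2)" using u1 by (simp add: \<theta>_def cos_arcsin)
  have "s * sqrt (1 - u\<^sup>2) = sqrt (s\<^sup>2 * (1 - u\<^sup>2))" using s0 by (simp add: real_sqrt_mult)
  also have "s\<^sup>2 * (1 - u\<^sup>2) = (Re d)\<^sup>2"
  proof -
    have "s\<^sup>2 * (1 - u\<^sup>2) = s\<^sup>2 - (Im d)\<^sup>2" using s0 by (simp add: u_def power_divide field_simps)
    also have "\<dots> = (Re d)\<^sup>2" using cmod_power2[of d] by (simp add: s_def)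
    finally show ?thesis .
  qed
  also have "sqrt ((Re d)\<^sup>2) = Re d" using d j by simp
  finally have re: "s * cos \<theta> = Re d" using cos by simp
  have im: "s * sin \<theta> = Im d" using sin s0 by (simp add: u_def)
  have eq: "d = complex_of_real s * cis \<theta>"
    by (simp add: complex_eq_iff re im)
  have "\<bar>\<theta>\<bar> < arcsin (C / real j)"
  proof (cases "u \<ge> 0")
    case True
    have "\<theta> \<ge> 0" using True u1 by (simp add: \<theta>_def arcsin_nonneg)
    moreover have "\<theta> < arcsin (C / real j)" unfolding \<theta>_def
      using True uC Cj by (intro arcsin_less_arcsin) auto
    ultimately show ?thesis by simp
  next
    case False
    have "\<theta> = - arcsin (- u)" using u1 arcsin_minus[of "-u"] by (simp add: \<theta>_def)
    moreover have "arcsin (- u) \<ge> 0" using False u1 by (intro arcsin_nonneg) auto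
    moreover have "arcsin (- u) < arcsin (C / real j)"
      using False uC Cj by (intro arcsin_less_arcsin) auto
    ultimately show ?thesis by simp
  qed
  thus ?thesis unfolding sector_def using eq s0 by blast
qed

context L34 begin

lemma HH_small:
  assumes r: "r \<in> B" and t: "0 < t" "t \<le> 1"
    and M: "M \<ge> 0" "\<And>r x. r \<in> B \<Longrightarrow> x \<ge> R - 1 \<Longrightarrow> cmod (\<alpha> r (gam r x)) \<le> M"
    and z: "Re z < real j + 2 + 1/4" "\<bar>Im z\<bar> < C + 1/4"
  shows "cmod (HH t r z) \<le> 6 * M * (b - a1) * sqrt t"
proof -
  have a1R: "a1 \<ge> R - 1" "a1 \<le> b" using a1_ge by simp_all
  define e where "e = exp (- (1/2) / t)"
  have e: "e \<le> 2 * t" "e \<ge> 0" using G1[of "1/2" t] t by (simp_all add: e_def)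
  have c: "ct t > 0" "sqrt t / 2 \<le> ct t" using ct_pos[OF t] by simp_all
  have "cmod (integral {a1..b} (FF t r z)) \<le> integral {a1..b} (\<lambda>x. M * (3/2 * e))"
  proof (rule integral_norm_bound_integral)
    show "FF t r z integrable_on {a1..b}"
      by (rule integrable_continuous_interval, rule cont_FF(1)[OF t(1), where \<rho>="\<lambda>_. r" and \<zeta>="\<lambda>_. z"])
         (auto intro!: continuous_intros simp: r intro: order_trans[OF a1R(1)])
    show "(\<lambda>x. M * (3/2 * e)) integrable_on {a1..b}" by (rule integrable_continuous_interval, rule continuous_on_const)
    fix x assume x: "x \<in> {a1..b}"
    have xR: "x \<ge> R - 1" using x a1R by auto
    define w where "w = gam r x - z"
    define p where "p = 3/4 + 3 * C / 2"
    define q where "q = 3 * C / 2 + 1/4"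
    have pw: "Re w > p" using x z(1) by (simp add: w_def p_def a1_def)
    have "\<bar>h r x\<bar> < C / 2" using h_bd r xR by auto
    hence qw: "\<bar>Im w\<bar> < q" using z(2) by (simp add: w_def q_def)
    have "p\<^sup>2 \<le> (Re w)\<^sup>2" using pw Cpos by (intro power_mono) (auto simp: p_def)
    moreover have "\<bar>Im w\<bar>\<^sup>2 \<le> q\<^sup>2" using qw by (intro power_mono) auto
    moreover have "p\<^sup>2 - q\<^sup>2 = 1/2 + 3 * C / 2" by (simp add: p_def q_def power2_eq_square field_simps)
    ultimately have "1/2 \<le> (Re w)\<^sup>2 - (Im w)\<^sup>2" using Cpos by simp
    hence "- ((Re w)\<^sup>2 - (Im w)\<^sup>2) / t \<le> - (1/2) / t" using t by (intro divide_right_mono) auto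
    hence K: "cmod (KK t w) \<le> e" unfolding KK_def normK e_def by simp
    have "cmod (FF t r z x) = cmod (\<alpha> r (gam r x)) * cmod (gam' r x) * cmod (KK t w)"
      by (simp add: FF_def w_def norm_mult)
    also have "\<dots> \<le> M * (3/2) * e"
      using M(2)[OF r xR] gam'_bd[OF r xR] K M(1) e by (intro mult_mono) auto
    finally show "cmod (FF t r z x) \<le> M * (3/2 * e)" by simp
  qed
  also have "\<dots> = (b - a1) * (M * (3/2 * e))" using a1R by simp
  also have "\<dots> \<le> (b - a1) * (M * (3/2 * (2 * t)))"
    using a1R M e by (intro mult_left_mono) auto
  also have "\<dots> = 3 * M * (b - a1) * t" by (simp add: algebra_simps)
  finally have I: "cmod (integral {a1..b} (FF t r z)) \<le> 3 * M * (b - a1) * t" .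
  have "cmod (HH t r z) = cmod (integral {a1..b} (FF t r z)) / ct t"
    using c by (simp add: HH_def norm_divide)
  also have "\<dots> \<le> 3 * M * (b - a1) * t / (sqrt t / 2)"
  proof (rule frac_le)
    show "0 \<le> 3 * M * (b - a1) * t" using M a1R t by simp
  qed (use I c t in auto)
  also have "\<dots> = 6 * M * (b - a1) * (t / sqrt t)" by simp
  also have "t / sqrt t = sqrt t" using t by (simp add: real_div_sqrt)
  finally show ?thesis .
qed

end

context L34 begin

lemma D_prop:
  assumes "d \<in> {z. real j + 1 < Re z \<and> cmod z < b \<and> \<bar>Im z\<bar> < C} \<inter>
                  ({z. 0 < Re z \<and> Re z < real j + 2 \<and> \<bar>Im z\<bar> < C} \<union> (ball 0 b - closure (sector C j)))"
  shows "Re d < real j + 2 \<and> \<bar>Im d\<bar> < C"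
proof -
  have d1: "real j + 1 < Re d" "\<bar>Im d\<bar> < C" using assms by auto
  have "d \<in> sector C j" by (rule in_sector[OF Cpos jC d1])
  hence "d \<notin> ball 0 b - closure (sector C j)" using closure_subset by (metis DiffD2 subsetD)
  thus ?thesis using assms by auto
qed

lemma nbhd_prop:
  assumes "z \<in> nbhd ({z. real j + 1 < Re z \<and> cmod z < b \<and> \<bar>Im z\<bar> < C} \<inter>
                  ({z. 0 < Re z \<and> Re z < real j + 2 \<and> \<bar>Im z\<bar> < C} \<union> (ball 0 b - closure (sector C j)))) (1/4)"
  shows "Re z < real j + 2 + 1/4" "\<bar>Im z\<bar> < C + 1/4"
proof -
  define D where "D = {z. real j + 1 < Re z \<and> cmod z < b \<and> \<bar>Im z\<bar> < C} \<inter>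
                  ({z. 0 < Re z \<and> Re z < real j + 2 \<and> \<bar>Im z\<bar> < C} \<union> (ball 0 b - closure (sector C j)))"
  have "Complex (real j + 3/2) 0 \<in> D"
    using b Cpos by (simp add: D_def complex_norm)
  hence ne: "D \<noteq> {}" by blast
  have "infdist z D < 1/4" using assms by (simp add: nbhd_def D_def)
  hence "Inf (dist z ` D) < 1/4" using ne by (simp add: infdist_notempty)
  then obtain y where "y \<in> dist z ` D" "y < 1/4" using ne cInf_lessD[of "dist z ` D" "1/4"] by blast
  then obtain d where d: "d \<in> D" "dist z d < 1/4" by blast
  have dp: "Re d < real j + 2" "\<bar>Im d\<bar> < C" using D_prop d(1) unfolding D_def by blast+
  have "\<bar>Re (z - d)\<bar> \<le> cmod (z - d)" "\<bar>Im (z - d)\<bar> \<le> cmod (z - d)"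
    by (rule abs_Re_le_cmod, rule abs_Im_le_cmod)
  moreover have "cmod (z - d) < 1/4" using d(2) by (simp add: dist_norm)
  ultimately show "Re z < real j + 2 + 1/4" "\<bar>Im z\<bar> < C + 1/4" using dp by auto
qed

lemma main:
  "\<forall>\<epsilon>>0. \<exists>H :: real \<Rightarrow> real ^ 'm \<Rightarrow> complex \<Rightarrow> complex. \<exists>t0>0.
           (\<forall>t>0. H t \<in> P_class B) \<and>
           (\<forall>r\<in>B. \<forall>t. 0 < t \<and> t < t0 \<longrightarrow>
               (\<exists>M<\<epsilon>. \<forall>z\<in>graph_curve h {R - 1..} r. cmod (\<alpha> r z - H t r z) \<le> M)) \<and>
           (\<exists>\<delta>>0. uniform_limit (B \<times> nbhd
                 ({z. real j + 1 < Re z \<and> cmod z < b \<and> \<bar>Im z\<bar> < C} \<inter>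
                  ({z. 0 < Re z \<and> Re z < real j + 2 \<and> \<bar>Im z\<bar> < C} \<union> (ball 0 b - closure (sector C j)))) \<delta>)
               (\<lambda>t (r, z). H t r z) (\<lambda>_. 0) (at_right 0))"
proof (intro allI impI)
  fix \<epsilon> :: real assume \<epsilon>: "\<epsilon> > 0"
  define S where "S = B \<times> {R - 1..b + 1}"
  have cS: "compact S" unfolding S_def by (intro compact_Times B compact_Icc)
  have contS: "continuous_on S (\<lambda>(r, x). \<alpha> r (gam r x))"
    by (rule continuous_on_subset[OF cont_phi]) (auto simp: S_def)
  have "bounded ((\<lambda>(r, x). \<alpha> r (gam r x)) ` S)"
    by (rule compact_imp_bounded[OF compact_continuous_image[OF contS cS]])
  then obtain M0 where M0': "\<forall>y \<in> (\<lambda>(r, x). \<alpha> r (gam r x)) ` S. norm y \<le> M0"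
    unfolding bounded_iff by blast
  have M0: "cmod ((\<lambda>(r, x). \<alpha> r (gam r x)) p) \<le> M0" if "p \<in> S" for p
    using M0' that by blast
  define M where "M = max M0 0"
  have M: "M \<ge> 0" by (simp add: M_def)
  have Mb: "cmod (\<alpha> r (gam r x)) \<le> M" if "r \<in> B" "x \<ge> R - 1" for r x
  proof (cases "x \<le> b + 1")
    case True
    hence "(r, x) \<in> S" using that by (simp add: S_def)
    from M0[OF this] show ?thesis by (simp add: M_def)
  next
    case False
    hence "\<alpha> r (gam r x) = 0" using supp(2)[OF that] by (cases "\<alpha> r (gam r x) = 0") auto
    thus ?thesis using M by simp
  qed
  define \<eta> where "\<eta> = \<epsilon> / 12"
  have \<eta>: "\<eta> > 0" using \<epsilon> by (simp add: \<eta>_def)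
  have "uniformly_continuous_on S (\<lambda>(r, x). \<alpha> r (gam r x))"
    by (rule compact_uniformly_continuous[OF contS cS])
  hence "\<exists>d>0. \<forall>p\<in>S. \<forall>q\<in>S. dist q p < d \<longrightarrow>
      dist ((\<lambda>(r, x). \<alpha> r (gam r x)) q) ((\<lambda>(r, x). \<alpha> r (gam r x)) p) < \<eta>"
    unfolding uniformly_continuous_on_def using \<eta> by blast
  then obtain d where d: "d > 0" and dU0: "\<forall>p\<in>S. \<forall>q\<in>S. dist q p < d \<longrightarrow>
      dist ((\<lambda>(r, x). \<alpha> r (gam r x)) q) ((\<lambda>(r, x). \<alpha> r (gam r x)) p) < \<eta>" by blast
  have dU: "dist ((\<lambda>(r, x). \<alpha> r (gam r x)) q) ((\<lambda>(r, x). \<alpha> r (gam r x)) p) < \<eta>"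
    if "p \<in> S" "q \<in> S" "dist q p < d" for p q
    using dU0 that by blast
  define \<rho> where "\<rho> = min d 1"
  have \<rho>: "0 < \<rho>" "\<rho> \<le> 1" using d by (auto simp: \<rho>_def)
  have UC: "cmod (\<alpha> r (gam r x) - \<alpha> r (gam r y)) \<le> \<eta>"
    if "r \<in> B" "x \<in> {R - 1..b + 1}" "y \<in> {R - 1..b + 1}" "\<bar>x - y\<bar> < \<rho>" for r x y
  proof -
    have "dist (r, x) (r, y) < d" using that(4) by (simp add: dist_Pair_Pair dist_real_def \<rho>_def)
    from dU[of "(r, y)" "(r, x)", OF _ _ this] that(1-3)
    show ?thesis by (simp add: S_def dist_norm)
  qed
  define Q where "Q = M * (3 * (b - a1) + 2 * LL + 2 * C)"
  have Q: "Q \<ge> 0" using M a1_ge LL_ge Cpos by (simp add: Q_def)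
  define \<kappa> where "\<kappa> = 3/4 * \<rho>\<^sup>2"
  have \<kappa>: "\<kappa> > 0" using \<rho> by (simp add: \<kappa>_def)
  define t0 where "t0 = min 1 ((\<epsilon> * \<kappa> / (4 * (Q + 1)))\<^sup>2)"
  have t0: "t0 > 0" using \<epsilon> \<kappa> Q by (simp add: t0_def)
  have part2: "\<exists>M'<\<epsilon>. \<forall>z\<in>graph_curve h {R - 1..} r. cmod (\<alpha> r z - HH t r z) \<le> M'"
    if r: "r \<in> B" and t: "0 < t" "t < t0" for r t
  proof -
    have t1: "t \<le> 1" using t by (simp add: t0_def)
    have c: "ct t > 0" "sqrt t / 2 \<le> ct t" using ct_pos[OF t(1) t1] by simp_all
    have "t < (\<epsilon> * \<kappa> / (4 * (Q + 1)))\<^sup>2" using t by (simp add: t0_def)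
    hence "sqrt t < sqrt ((\<epsilon> * \<kappa> / (4 * (Q + 1)))\<^sup>2)" by (simp only: real_sqrt_less_iff)
    hence st: "sqrt t < \<epsilon> * \<kappa> / (4 * (Q + 1))" using \<epsilon> \<kappa> Q by simp
    define M' where "M' = 6 * \<eta> + 2 * (Q + 1) * sqrt t / \<kappa>"
    have "2 * (Q + 1) * sqrt t < 2 * (Q + 1) * (\<epsilon> * \<kappa> / (4 * (Q + 1)))"
      using st Q by (intro mult_strict_left_mono) auto
    also have "\<dots> = \<epsilon> * \<kappa> / 2" using Q by (simp add: field_simps)
    finally have "2 * (Q + 1) * sqrt t / \<kappa> < \<epsilon> / 2" using \<kappa> by (simp add: field_simps)
    hence M'\<epsilon>: "M' < \<epsilon>" by (simp add: M'_def \<eta>_def)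
    have "cmod (\<alpha> r z - HH t r z) \<le> M'" if z: "z \<in> graph_curve h {R - 1..} r" for z
    proof -
      obtain x0 where x0: "x0 \<ge> R - 1" "z = gam r x0" using z by (auto simp: graph_curve_def gam_eq)
      have A: "ct t * cmod (\<alpha> r z - HH t r z) \<le> 6 * \<eta> * ct t + Q * exp (- \<kappa> / t)"
        unfolding x0(2) Q_def \<kappa>_def
        by (rule approx[OF r t(1) t1 x0(1) M Mb \<rho> less_imp_le[OF \<eta>] UC]) auto
      have "exp (- \<kappa> / t) \<le> t / \<kappa>" by (rule G1[OF \<kappa> t(1)])
      have "cmod (\<alpha> r z - HH t r z) \<le> 6 * \<eta> + Q * exp (- \<kappa> / t) / ct t"
        using A c by (simp add: field_simps)
      also have "Q * exp (- \<kappa> / t) / ct t \<le> Q * (t / \<kappa>) / (sqrt t / 2)"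
      proof (rule frac_le)
        show "0 \<le> Q * (t / \<kappa>)" using Q t \<kappa> by simp
        show "Q * exp (- \<kappa> / t) \<le> Q * (t / \<kappa>)" by (rule mult_left_mono[OF \<open>exp (- \<kappa> / t) \<le> t / \<kappa>\<close> Q])
      qed (use c t in auto)
      also have "Q * (t / \<kappa>) / (sqrt t / 2) = 2 * Q * (t / sqrt t) / \<kappa>" by (simp add: field_simps)
      also have "t / sqrt t = sqrt t" using t by (simp add: real_div_sqrt)
      also have "2 * Q * sqrt t / \<kappa> \<le> 2 * (Q + 1) * sqrt t / \<kappa>" using \<kappa> t
        by (intro divide_right_mono mult_right_mono) auto
      finally show ?thesis by (simp add: M'_def)
    qed
    thus ?thesis using M'\<epsilon> by blast
  qed
  have part3: "uniform_limit (B \<times> nbhd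
                 ({z. real j + 1 < Re z \<and> cmod z < b \<and> \<bar>Im z\<bar> < C} \<inter>
                  ({z. 0 < Re z \<and> Re z < real j + 2 \<and> \<bar>Im z\<bar> < C} \<union> (ball 0 b - closure (sector C j)))) (1/4))
               (\<lambda>t (r, z). HH t r z) (\<lambda>_. 0) (at_right 0)"
  proof (rule uniform_limitI)
    fix e :: real assume e: "e > 0"
    define K where "K = 6 * M * (b - a1)"
    have K: "K \<ge> 0" using M a1_ge by (simp add: K_def)
    define t1 where "t1 = min 1 ((e / (K + 1))\<^sup>2)"
    have t1: "t1 > 0" using e K by (simp add: t1_def)
    show "\<forall>\<^sub>F t in at_right 0. \<forall>p\<in>B \<times> nbhd
                 ({z. real j + 1 < Re z \<and> cmod z < b \<and> \<bar>Im z\<bar> < C} \<inter>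
                  ({z. 0 < Re z \<and> Re z < real j + 2 \<and> \<bar>Im z\<bar> < C} \<union> (ball 0 b - closure (sector C j)))) (1/4).
            dist ((\<lambda>(r, z). HH t r z) p) 0 < e"
      unfolding eventually_at_right_field
    proof (intro exI[of _ t1] conjI allI impI ballI)
      show "0 < t1" by (rule t1)
      fix t p assume t: "0 < t" "t < t1"
        and p: "p \<in> B \<times> nbhd
                 ({z. real j + 1 < Re z \<and> cmod z < b \<and> \<bar>Im z\<bar> < C} \<inter>
                  ({z. 0 < Re z \<and> Re z < real j + 2 \<and> \<bar>Im z\<bar> < C} \<union> (ball 0 b - closure (sector C j)))) (1/4)"
      obtain r z where rz: "p = (r, z)" by (cases p)
      have r: "r \<in> B" and zn: "z \<in> nbhd
                 ({z. real j + 1 < Re z \<and> cmod z < b \<and> \<bar>Im z\<bar> < C} \<inter>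
                  ({z. 0 < Re z \<and> Re z < real j + 2 \<and> \<bar>Im z\<bar> < C} \<union> (ball 0 b - closure (sector C j)))) (1/4)"
        using p rz by auto
      have tt: "t \<le> 1" using t by (simp add: t1_def)
      have "t < (e / (K + 1))\<^sup>2" using t by (simp add: t1_def)
      hence "sqrt t < sqrt ((e / (K + 1))\<^sup>2)" by (simp only: real_sqrt_less_iff)
      hence st: "sqrt t < e / (K + 1)" using e K by simp
      have "cmod (HH t r z) \<le> K * sqrt t"
        unfolding K_def by (rule HH_small[OF r t(1) tt M Mb nbhd_prop[OF zn]])
      also have "\<dots> \<le> (K + 1) * sqrt t" using t by (intro mult_right_mono) auto
      also have "\<dots> < (K + 1) * (e / (K + 1))" using st K by (intro mult_strict_left_mono) auto
      also have "\<dots> = e" using K by simp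
      finally show "dist ((\<lambda>(r, z). HH t r z) p) 0 < e" by (simp add: rz)
    qed
  qed
  show "\<exists>H :: real \<Rightarrow> real ^ 'm \<Rightarrow> complex \<Rightarrow> complex. \<exists>t0>0.
           (\<forall>t>0. H t \<in> P_class B) \<and>
           (\<forall>r\<in>B. \<forall>t. 0 < t \<and> t < t0 \<longrightarrow>
               (\<exists>M<\<epsilon>. \<forall>z\<in>graph_curve h {R - 1..} r. cmod (\<alpha> r z - H t r z) \<le> M)) \<and>
           (\<exists>\<delta>>0. uniform_limit (B \<times> nbhd
                 ({z. real j + 1 < Re z \<and> cmod z < b \<and> \<bar>Im z\<bar> < C} \<inter>
                  ({z. 0 < Re z \<and> Re z < real j + 2 \<and> \<bar>Im z\<bar> < C} \<union> (ball 0 b - closure (sector C j)))) \<delta>)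
               (\<lambda>t (r, z). H t r z) (\<lambda>_. 0) (at_right 0))"
  proof (rule exI[of _ HH], rule exI[of _ t0], intro conjI)
    show "t0 > 0" by (rule t0)
    show "\<forall>t>0. HH t \<in> P_class B" using HH_P by blast
    show "\<forall>r\<in>B. \<forall>t. 0 < t \<and> t < t0 \<longrightarrow>
               (\<exists>M<\<epsilon>. \<forall>z\<in>graph_curve h {R - 1..} r. cmod (\<alpha> r z - HH t r z) \<le> M)"
      using part2 by blast
    have "(1/4::real) > 0" by simp
    thus "\<exists>\<delta>>0. uniform_limit (B \<times> nbhd
                 ({z. real j + 1 < Re z \<and> cmod z < b \<and> \<bar>Im z\<bar> < C} \<inter>
                  ({z. 0 < Re z \<and> Re z < real j + 2 \<and> \<bar>Im z\<bar> < C} \<union> (ball 0 b - closure (sector C j)))) \<delta>)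
               (\<lambda>t (r, z). HH t r z) (\<lambda>_. 0) (at_right 0)"
      using part3 by blast
  qed
qed

end

theorem lemma3p4:
  fixes R C b :: real and j :: nat
    and B :: "(real ^ 'm) set"
    and h h' :: "real ^ 'm \<Rightarrow> real \<Rightarrow> real"
    and \<alpha> :: "real ^ 'm \<Rightarrow> complex \<Rightarrow> complex"
  assumes R: "R > 1" and Cpos: "C > 0"
    and B: "compact B"
    and h_cont: "continuous_on (B \<times> {R - 1..}) (\<lambda>(r, x). h r x)"
    and h_deriv: "\<forall>r\<in>B. \<forall>x\<in>{R - 1..}. (h r has_real_derivative h' r x) (at x within {R - 1..})"
    and h'_cont: "continuous_on (B \<times> {R - 1..}) (\<lambda>(r, x). h' r x)"
    and h_bd: "\<forall>r\<in>B. \<forall>x\<in>{R - 1..}. \<bar>h r x\<bar> < C / 2"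
    and h'_bd: "\<forall>r\<in>B. \<forall>x\<in>{R - 1..}. \<bar>h' r x\<bar> < 1 / 2"
    and jR: "real j \<ge> R" and jC: "real j \<ge> C"
    and b: "b > real j + 3 + 3 * C / 2"
    and \<alpha>_cont: "continuous_on (SIGMA r:B. graph_curve h {R - 1..} r) (\<lambda>(r, z). \<alpha> r z)"
    and \<alpha>_cpt: "\<forall>r\<in>B. compact (closure {z \<in> graph_curve h {R - 1..} r. \<alpha> r z \<noteq> 0})"
    and \<alpha>_supp: "\<forall>r\<in>B. closure {z \<in> graph_curve h {R - 1..} r. \<alpha> r z \<noteq> 0}
        \<subseteq> {z \<in> graph_curve h {R - 1..} r. real j + 3 + 3 * C / 2 < Re z \<and> cmod z < b \<and> \<bar>Im z\<bar> < C / 2}"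
  shows "\<forall>\<epsilon>>0. \<exists>H :: real \<Rightarrow> real ^ 'm \<Rightarrow> complex \<Rightarrow> complex. \<exists>t0>0.
           (\<forall>t>0. H t \<in> P_class B) \<and>
           (\<forall>r\<in>B. \<forall>t. 0 < t \<and> t < t0 \<longrightarrow>
               (\<exists>M<\<epsilon>. \<forall>z\<in>graph_curve h {R - 1..} r. cmod (\<alpha> r z - H t r z) \<le> M)) \<and>
           (\<exists>\<delta>>0. uniform_limit (B \<times> nbhd
                 ({z. real j + 1 < Re z \<and> cmod z < b \<and> \<bar>Im z\<bar> < C} \<inter>
                  ({z. 0 < Re z \<and> Re z < real j + 2 \<and> \<bar>Im z\<bar> < C} \<union> (ball 0 b - closure (sector C j)))) \<delta>)
               (\<lambda>t (r, z). H t r z) (\<lambda>_. 0) (at_right 0))"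
proof -
  interpret L: L34 R C b j B h h' \<alpha>
    by (rule L34.intro[OF R Cpos B h_cont h_deriv h'_cont h_bd h'_bd jR jC b \<alpha>_cont \<alpha>_cpt \<alpha>_supp])
  show ?thesis by (rule L.main)
qed

end
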